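(* Let $M$ be a von Neumann algebra with a normal tracial state $\varphi$, and let $Z_1,\ldots,Z_n$ be finite ordered sets of selfadjoint elements of $M$ with $\alpha_i=\delta_0(Z_i)$ and $\alpha=\alpha_1+\cdots+\alpha_n$. Then \[\mathbb P^{\alpha}(Z_1\cup\cdots\cup Z_n)\le\mathbb P^{\alpha_1}(Z_1)+\cdots+\mathbb P^{\alpha_n}(Z_n)+\alpha\log(4\sqrt n).\]
   Context: $Z_1\cup\cdots\cup Z_n$ denotes the ordered tuple listing the elements of $Z_1$ in order, then those of $Z_2$, etc.; quantities for an ordered set are those of the corresponding tuple. Notation. $M_k^{sa}(\mathbb C)$: $k\times k$ selfadjoint complex matrices; $tr_k$ normalized trace; metric on $(M_k^{sa}(\mathbb C))^N$ from $|(x_1,\ldots,x_N)|_2=(\sum_i tr_k(x_i^2))^{1/2}$. For selfadjoint $w=(w_1,\ldots,w_N)$ in $M$, $\Gamma_R(w;m,k,\gamma)$ is the set of $(x_1,\ldots,x_N)\in(M_k^{sa}(\mathbb C))^N$ with $\|x_j\|\le R$ and $|tr_k(x_{i_1}\cdots x_{i_p})-\varphi(w_{i_1}\cdots w_{i_p})|<\gamma$ for all $1\le p\le m$, $i_1,\ldots,i_p\in\{1,\ldots,N\}$. Free packing entropy: for a metric space $X$, $P_\epsilon(X)$ is the maximum number of mutually disjoint open $\epsilon$-balls in $X$. Set $\mathbb P_{\epsilon,R}(w;m,\gamma)=\limsup_k k^{-2}\log P_\epsilon(\Gamma_R(w;m,k,\gamma))$ (w.r.t. $|\cdot|_2$,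 $\log0=-\infty$), $\mathbb P_{\epsilon,R}(w)=\inf_{m,\gamma}\mathbb P_{\epsilon,R}(w;m,\gamma)$, $\mathbb P^\alpha_R(w)=\limsup_{\epsilon\to0}[\mathbb P_{\epsilon,R}(w)+\alpha\log2\epsilon]$, and $\mathbb P^\alpha(w)=\sup_{R>0}\mathbb P^\alpha_R(w)$. $\delta_0$: vol is Lebesgue measure on $(M_k^{sa}(\mathbb C))^N$ for the norm $(k\sum_j tr_k(x_j^2))^{1/2}$; for selfadjoint tuples $x$ (length $N$) and $y$, $\Gamma_R(x:y;m,k,\gamma)$ is the projection onto the first $N$ coordinates of $\Gamma_R(x,y;m,k,\gamma)$, $\chi(x:y)=\sup_R\inf_{m,\gamma}\limsup_k[k^{-2}\log\mathrm{vol}\Gamma_R(x:y;m,k,\gamma)+\tfrac N2\log k]$; with $s_1,\ldots,s_N$ a free semicircular family free from $w$, $\delta_0(w)=N+\limsup_{\epsilon\to0}\chi(w_1+\epsilon s_1,\ldots,w_N+\epsilon s_N:s_1,\ldots,s_N)/|\log\epsilon|$. *)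

theory Defs
  imports "HOL-Analysis.Analysis"
begin

section \<open>Abstract von Neumann (W*-) algebras\<close>

text \<open>A unital complex *-algebra with a norm, given by its operations on the whole type 'a.\<close>
record 'a wstar_alg =
  vadd :: "'a \<Rightarrow> 'a \<Rightarrow> 'a"
  vzero :: 'a
  smul :: "complex \<Rightarrow> 'a \<Rightarrow> 'a"
  vmul :: "'a \<Rightarrow> 'a \<Rightarrow> 'a"
  vone :: 'a
  vstar :: "'a \<Rightarrow> 'a"
  vnorm :: "'a \<Rightarrow> real"

definition vsub :: "'a wstar_alg \<Rightarrow> 'a \<Rightarrow> 'a \<Rightarrow> 'a" where
  "vsub A a b = vadd A a (smul A (-1) b)"

definition cstar_algebra :: "'a wstar_alg \<Rightarrow> bool" where
  "cstar_algebra A \<longleftrightarrow>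
     (\<forall>a b c. vadd A (vadd A a b) c = vadd A a (vadd A b c)) \<and>
     (\<forall>a b. vadd A a b = vadd A b a) \<and>
     (\<forall>a. vadd A a (vzero A) = a) \<and>
     (\<forall>a. smul A 1 a = a) \<and>
     (\<forall>a. smul A 0 a = vzero A) \<and>
     (\<forall>c d a. smul A c (smul A d a) = smul A (c * d) a) \<and>
     (\<forall>c d a. smul A (c + d) a = vadd A (smul A c a) (smul A d a)) \<and>
     (\<forall>c a b. smul A c (vadd A a b) = vadd A (smul A c a) (smul A c b)) \<and>
     (\<forall>a b c. vmul A (vmul A a b) c = vmul A a (vmul A b c)) \<and>
     (\<forall>a. vmul A (vone A) a = a \<and> vmul A a (vone A) = a) \<and>
     (\<forall>a b c. vmul A a (vadd A b c) = vadd A (vmul A a b) (vmul A a c)) \<and>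
     (\<forall>a b c. vmul A (vadd A a b) c = vadd A (vmul A a c) (vmul A b c)) \<and>
     (\<forall>z a b. vmul A (smul A z a) b = smul A z (vmul A a b)) \<and>
     (\<forall>z a b. vmul A a (smul A z b) = smul A z (vmul A a b)) \<and>
     (\<forall>a. vstar A (vstar A a) = a) \<and>
     (\<forall>a b. vstar A (vadd A a b) = vadd A (vstar A a) (vstar A b)) \<and>
     (\<forall>z a. vstar A (smul A z a) = smul A (cnj z) (vstar A a)) \<and>
     (\<forall>a b. vstar A (vmul A a b) = vmul A (vstar A b) (vstar A a)) \<and>
     (\<forall>a. vnorm A a = 0 \<longleftrightarrow> a = vzero A) \<and>
     (\<forall>a b. vnorm A (vadd A a b) \<le> vnorm A a + vnorm A b) \<and>
     (\<forall>z a. vnorm A (smul A z a) = cmod z * vnorm A a) \<and>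
     (\<forall>a b. vnorm A (vmul A a b) \<le> vnorm A a * vnorm A b) \<and>
     (\<forall>a. vnorm A (vmul A (vstar A a) a) = (vnorm A a)\<^sup>2) \<and>
     (\<forall>f :: nat \<Rightarrow> 'a. (\<forall>e>0. \<exists>N. \<forall>m\<ge>N. \<forall>n\<ge>N. vnorm A (vsub A (f m) (f n)) < e)
        \<longrightarrow> (\<exists>a. \<forall>e>0. \<exists>N. \<forall>n\<ge>N. vnorm A (vsub A (f n) a) < e))"

definition selfadj :: "'a wstar_alg \<Rightarrow> 'a \<Rightarrow> bool" where
  "selfadj A a \<longleftrightarrow> vstar A a = a"

definition vpos :: "'a wstar_alg \<Rightarrow> 'a \<Rightarrow> bool" where
  "vpos A a \<longleftrightarrow> (\<exists>b. a = vmul A (vstar A b) b)"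

definition vle :: "'a wstar_alg \<Rightarrow> 'a \<Rightarrow> 'a \<Rightarrow> bool" where
  "vle A a b \<longleftrightarrow> vpos A (vsub A b a)"

text \<open>Bounded, upward directed nonempty families of selfadjoint elements (nets, indexed by themselves).\<close>
definition bdd_directed :: "'a wstar_alg \<Rightarrow> 'a set \<Rightarrow> bool" where
  "bdd_directed A D \<longleftrightarrow> D \<noteq> {} \<and> (\<forall>x\<in>D. selfadj A x) \<and>
     (\<forall>x\<in>D. \<forall>y\<in>D. \<exists>z\<in>D. vle A x z \<and> vle A y z) \<and>
     (\<exists>c. selfadj A c \<and> (\<forall>x\<in>D. vle A x c))"

definition is_vsup :: "'a wstar_alg \<Rightarrow> 'a set \<Rightarrow> 'a \<Rightarrow> bool" where
  "is_vsup A D s \<longleftrightarrow> selfadj A s \<and> (\<forall>x\<in>D. vle A x s) \<and>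
     (\<forall>c. selfadj A c \<and> (\<forall>x\<in>D. vle A x c) \<longrightarrow> vle A s c)"

definition is_state :: "'a wstar_alg \<Rightarrow> ('a \<Rightarrow> complex) \<Rightarrow> bool" where
  "is_state A \<omega> \<longleftrightarrow> (\<forall>a b. \<omega> (vadd A a b) = \<omega> a + \<omega> b) \<and>
     (\<forall>z a. \<omega> (smul A z a) = z * \<omega> a) \<and>
     (\<forall>a. vpos A a \<longrightarrow> Im (\<omega> a) = 0 \<and> Re (\<omega> a) \<ge> 0) \<and>
     \<omega> (vone A) = 1"

definition normal_state :: "'a wstar_alg \<Rightarrow> ('a \<Rightarrow> complex) \<Rightarrow> bool" where
  "normal_state A \<omega> \<longleftrightarrow> is_state A \<omega> \<and>
     (\<forall>D s. bdd_directed A D \<and> is_vsup A D s \<longrightarrow> Re (\<omega> s) = (SUP x\<in>D. Re (\<omega> x)))"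

text \<open>Von Neumann algebra, abstractly (Kadison's characterisation of W*-algebras):
  a C*-algebra that is monotone complete and has a separating family of normal states.\<close>
definition von_neumann_algebra :: "'a wstar_alg \<Rightarrow> bool" where
  "von_neumann_algebra A \<longleftrightarrow> cstar_algebra A \<and>
     (\<forall>D. bdd_directed A D \<longrightarrow> (\<exists>s. is_vsup A D s)) \<and>
     (\<forall>a. a \<noteq> vzero A \<longrightarrow> (\<exists>\<omega>. normal_state A \<omega> \<and> \<omega> a \<noteq> 0))"

definition normal_tracial_state :: "'a wstar_alg \<Rightarrow> ('a \<Rightarrow> complex) \<Rightarrow> bool" where
  "normal_tracial_state A \<phi> \<longleftrightarrow> normal_state A \<phi> \<and> (\<forall>a b. \<phi> (vmul A a b) = \<phi> (vmul A b a))"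

definition vmom :: "'a wstar_alg \<Rightarrow> ('a \<Rightarrow> complex) \<Rightarrow> 'a list \<Rightarrow> nat list \<Rightarrow> complex" where
  "vmom A \<phi> ws u = \<phi> (foldr (\<lambda>i acc. vmul A (ws ! i) acc) u (vone A))"

section \<open>k x k complex matrices\<close>

type_synonym cmat = "nat \<Rightarrow> nat \<Rightarrow> complex"

definition mmul :: "nat \<Rightarrow> cmat \<Rightarrow> cmat \<Rightarrow> cmat" where
  "mmul k X Y = (\<lambda>i j. if i < k \<and> j < k then (\<Sum>l<k. X i l * Y l j) else 0)"

definition mone :: "nat \<Rightarrow> cmat" where
  "mone k = (\<lambda>i j. if i < k \<and> i = j then 1 else 0)"

definition msub :: "cmat \<Rightarrow> cmat \<Rightarrow> cmat" where
  "msub X Y = (\<lambda>i j. X i j - Y i j)"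

definition mtr :: "nat \<Rightarrow> cmat \<Rightarrow> complex" where
  "mtr k X = (\<Sum>i<k. X i i) / of_nat k"

definition msa :: "nat \<Rightarrow> cmat \<Rightarrow> bool" where
  "msa k X \<longleftrightarrow> (\<forall>i j. (k \<le> i \<or> k \<le> j) \<longrightarrow> X i j = 0) \<and>
     (\<forall>i<k. \<forall>j<k. X i j = cnj (X j i))"

definition mopnorm :: "nat \<Rightarrow> cmat \<Rightarrow> real" where
  "mopnorm k X = Sup {sqrt (\<Sum>i<k. (cmod (\<Sum>j<k. X i j * v j))\<^sup>2) | v.
      (\<Sum>j<k. (cmod (v j))\<^sup>2) \<le> 1}"

definition mword :: "nat \<Rightarrow> cmat list \<Rightarrow> nat list \<Rightarrow> cmat" where
  "mword k xs u = foldr (\<lambda>i acc. mmul k (xs ! i) acc) u (mone k)"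

definition tdist :: "nat \<Rightarrow> cmat list \<Rightarrow> cmat list \<Rightarrow> real" where
  "tdist k xs ys = sqrt (\<Sum>i<length xs. Re (mtr k (mmul k (msub (xs ! i) (ys ! i)) (msub (xs ! i) (ys ! i)))))"

section \<open>Microstates for a moment functional mu on words over {0..<L}\<close>

definition Gamma :: "(nat list \<Rightarrow> complex) \<Rightarrow> nat \<Rightarrow> real \<Rightarrow> nat \<Rightarrow> nat \<Rightarrow> real \<Rightarrow> cmat list set" where
  "Gamma \<mu> L R m k \<gamma> = {xs. length xs = L \<and> (\<forall>x\<in>set xs. msa k x \<and> mopnorm k x \<le> R) \<and>
     (\<forall>u. 1 \<le> length u \<and> length u \<le> m \<and> set u \<subseteq> {..<L} \<longrightarrow>
        cmod (mtr k (mword k xs u) - \<mu> u) < \<gamma>)}"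

section \<open>Free packing entropy\<close>

definition packing_num :: "('b \<Rightarrow> 'b \<Rightarrow> real) \<Rightarrow> 'b set \<Rightarrow> real \<Rightarrow> enat" where
  "packing_num d X \<epsilon> = Sup {enat (card C) | C. finite C \<and> C \<subseteq> X \<and>
     (\<forall>c\<in>C. \<forall>c'\<in>C. c \<noteq> c' \<longrightarrow> {y\<in>X. d c y < \<epsilon>} \<inter> {y\<in>X. d c' y < \<epsilon>} = {})}"

definition eln_enat :: "enat \<Rightarrow> ereal" where
  "eln_enat n = (if n = 0 then -\<infinity> else if n = \<infinity> then \<infinity> else ereal (ln (real (the_enat n))))"

definition P_eps_R_mg :: "(nat list \<Rightarrow> complex) \<Rightarrow> nat \<Rightarrow> real \<Rightarrow> real \<Rightarrow> nat \<Rightarrow> real \<Rightarrow> ereal" where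
  "P_eps_R_mg \<mu> L \<epsilon> R m \<gamma> =
     limsup (\<lambda>k. ereal (1 / (real k)\<^sup>2) * eln_enat (packing_num (tdist k) (Gamma \<mu> L R m k \<gamma>) \<epsilon>))"

definition P_eps_R :: "(nat list \<Rightarrow> complex) \<Rightarrow> nat \<Rightarrow> real \<Rightarrow> real \<Rightarrow> ereal" where
  "P_eps_R \<mu> L \<epsilon> R = (INF m\<in>{1..}. INF \<gamma>\<in>{0<..}. P_eps_R_mg \<mu> L \<epsilon> R m \<gamma>)"

definition P_alpha_R :: "(nat list \<Rightarrow> complex) \<Rightarrow> nat \<Rightarrow> ereal \<Rightarrow> real \<Rightarrow> ereal" where
  "P_alpha_R \<mu> L \<alpha> R = Limsup (at_right 0) (\<lambda>\<epsilon>. P_eps_R \<mu> L \<epsilon> R + \<alpha> * ereal (ln (2 * \<epsilon>)))"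

definition P_alpha :: "(nat list \<Rightarrow> complex) \<Rightarrow> nat \<Rightarrow> ereal \<Rightarrow> ereal" where
  "P_alpha \<mu> L \<alpha> = (SUP R\<in>{0<..}. P_alpha_R \<mu> L \<alpha> R)"

definition packing_entropy :: "'a wstar_alg \<Rightarrow> ('a \<Rightarrow> complex) \<Rightarrow> ereal \<Rightarrow> 'a list \<Rightarrow> ereal" where
  "packing_entropy A \<phi> \<alpha> ws = P_alpha (vmom A \<phi> ws) (length ws) \<alpha>"

section \<open>Free entropy dimension delta_0\<close>

text \<open>Lebesgue measure on (M_k^sa)^L for the Hilbert-Schmidt norm, via an isometric
  coordinate map from R^(L k^2) (orthonormal basis E_aa, (E_ab+E_ba)/sqrt 2, i(E_ab-E_ba)/sqrt 2).\<close>
definition coord_mat :: "nat \<Rightarrow> (nat \<Rightarrow> real) \<Rightarrow> cmat" where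
  "coord_mat k c = (\<lambda>a b. if a < k \<and> b < k then
      (if a = b then complex_of_real (c (a * k + a))
       else if a < b then Complex (c (a * k + b)) (c (b * k + a)) / complex_of_real (sqrt 2)
       else Complex (c (b * k + a)) (- c (a * k + b)) / complex_of_real (sqrt 2))
     else 0)"

definition coord_tuple :: "nat \<Rightarrow> nat \<Rightarrow> (nat \<Rightarrow> real) \<Rightarrow> cmat list" where
  "coord_tuple L k c = map (\<lambda>j. coord_mat k (\<lambda>p. c (j * k * k + p))) [0..<L]"

definition mvol :: "nat \<Rightarrow> nat \<Rightarrow> cmat list set \<Rightarrow> ennreal" where
  "mvol L k S = emeasure (PiM {..<L * k * k} (\<lambda>_. lborel))
      {c \<in> space (PiM {..<L * k * k} (\<lambda>_. lborel)). coord_tuple L k c \<in> S}"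

definition eln_ennreal :: "ennreal \<Rightarrow> ereal" where
  "eln_ennreal v = (if v = 0 then -\<infinity> else if v = top then \<infinity> else ereal (ln (enn2real v)))"

text \<open>Gamma_R(x:y), x of length L, y of length L', joint moments mu on words over {0..<L+L'}\<close>
definition Gamma_proj :: "(nat list \<Rightarrow> complex) \<Rightarrow> nat \<Rightarrow> nat \<Rightarrow> real \<Rightarrow> nat \<Rightarrow> nat \<Rightarrow> real \<Rightarrow> cmat list set" where
  "Gamma_proj \<mu> L L' R m k \<gamma> = (\<lambda>xs. take L xs) ` Gamma \<mu> (L + L') R m k \<gamma>"

definition chi_rel :: "(nat list \<Rightarrow> complex) \<Rightarrow> nat \<Rightarrow> nat \<Rightarrow> ereal" where
  "chi_rel \<mu> L L' = (SUP R\<in>{0<..}. INF m\<in>{1..}. INF \<gamma>\<in>{0<..}.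
     limsup (\<lambda>k. ereal (1 / (real k)\<^sup>2) * eln_ennreal (mvol L k (Gamma_proj \<mu> L L' R m k \<gamma>))
                 + ereal (real L / 2 * ln (real k))))"

text \<open>noncommutative polynomials: finitely supported functions on words\<close>
type_synonym ncpoly = "nat list \<Rightarrow> complex"

definition pmul :: "ncpoly \<Rightarrow> ncpoly \<Rightarrow> ncpoly" where
  "pmul p q = (\<lambda>u. \<Sum>i\<le>length u. p (take i u) * q (drop i u))"

definition pone :: ncpoly where
  "pone = (\<lambda>u. if u = [] then 1 else 0)"

definition pprod :: "ncpoly list \<Rightarrow> ncpoly" where
  "pprod ps = foldr pmul ps pone"

definition plin :: "(nat list \<Rightarrow> complex) \<Rightarrow> ncpoly \<Rightarrow> complex" where
  "plin \<psi> p = (\<Sum>u\<in>{u. p u \<noteq> 0}. p u * \<psi> u)"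

text \<open>letters 0..<N are w_1..w_N (colour 0), letter N+j is s_(j+1) (colour j+1)\<close>
definition colour :: "nat \<Rightarrow> nat \<Rightarrow> nat" where
  "colour N l = (if l < N then 0 else l - N + 1)"

definition in_colour :: "nat \<Rightarrow> nat \<Rightarrow> ncpoly \<Rightarrow> bool" where
  "in_colour N c p \<longleftrightarrow> finite {u. p u \<noteq> 0} \<and>
     (\<forall>u. p u \<noteq> 0 \<longrightarrow> (\<forall>l\<in>set u. l < 2 * N \<and> colour N l = c))"

definition sc_mom :: "nat \<Rightarrow> complex" where
  "sc_mom n = (if even n then of_nat ((n choose (n div 2)) div (n div 2 + 1)) else 0)"

text \<open>psi is the joint distribution of (w_1..w_N, s_1..s_N), s a free semicircular family free from w\<close>
definition is_free_sc_ext :: "(nat list \<Rightarrow> complex) \<Rightarrow> nat \<Rightarrow> (nat list \<Rightarrow> complex) \<Rightarrow> bool" where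
  "is_free_sc_ext \<mu> N \<psi> \<longleftrightarrow>
     (\<forall>u. set u \<subseteq> {..<N} \<longrightarrow> \<psi> u = \<mu> u) \<and>
     (\<forall>j<N. \<forall>n. \<psi> (replicate n (N + j)) = sc_mom n) \<and>
     (\<forall>u. \<not> set u \<subseteq> {..<2 * N} \<longrightarrow> \<psi> u = 0) \<and>
     (\<forall>ps cs. length ps = length cs \<and> ps \<noteq> [] \<and>
        (\<forall>i<length cs. cs ! i \<le> N \<and> in_colour N (cs ! i) (ps ! i) \<and> plin \<psi> (ps ! i) = 0) \<and>
        (\<forall>i. Suc i < length cs \<longrightarrow> cs ! i \<noteq> cs ! Suc i)
        \<longrightarrow> plin \<psi> (pprod ps) = 0)"

definition free_sc_ext :: "(nat list \<Rightarrow> complex) \<Rightarrow> nat \<Rightarrow> nat list \<Rightarrow> complex" where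
  "free_sc_ext \<mu> N = (THE \<psi>. is_free_sc_ext \<mu> N \<psi>)"

text \<open>joint moments of (w_1 + eps s_1, ..., w_N + eps s_N, s_1, ..., s_N)\<close>
definition sub_poly :: "nat \<Rightarrow> real \<Rightarrow> nat \<Rightarrow> ncpoly" where
  "sub_poly N \<epsilon> l = (if l < N then (\<lambda>v. if v = [l] then 1 else if v = [N + l] then complex_of_real \<epsilon> else 0)
                      else (\<lambda>v. if v = [l] then 1 else 0))"

definition reg_mom :: "(nat list \<Rightarrow> complex) \<Rightarrow> nat \<Rightarrow> real \<Rightarrow> nat list \<Rightarrow> complex" where
  "reg_mom \<mu> N \<epsilon> u = plin (free_sc_ext \<mu> N) (pprod (map (sub_poly N \<epsilon>) u))"

definition delta0_mu :: "(nat list \<Rightarrow> complex) \<Rightarrow> nat \<Rightarrow> ereal" where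
  "delta0_mu \<mu> N = ereal (real N) +
     Limsup (at_right 0) (\<lambda>\<epsilon>. chi_rel (reg_mom \<mu> N \<epsilon>) N N * ereal (1 / \<bar>ln \<epsilon>\<bar>))"

definition delta0 :: "'a wstar_alg \<Rightarrow> ('a \<Rightarrow> complex) \<Rightarrow> 'a list \<Rightarrow> ereal" where
  "delta0 A \<phi> ws = delta0_mu (vmom A \<phi> ws) (length ws)"

end

theory Submission
  imports Defs "HOL-Library.FuncSet"
begin

lemma ereal_split:
  fixes a b z :: ereal
  assumes "a + b < z"
  shows "\<exists>a' b'. a < a' \<and> b < b' \<and> a' + b' \<le> z"
proof -
  have an: "a \<noteq> \<infinity>" and bn: "b \<noteq> \<infinity>" using assms by auto
  show ?thesis
  proof (cases z)
    case PInf
    then show ?thesis using an bn by (intro exI[of _ \<infinity>]) (auto simp: less_top)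
  next
    case MInf
    then show ?thesis using assms by simp
  next
    case (real r)
    show ?thesis
    proof (cases a)
      case (real x)
      show ?thesis
      proof (cases b)
        case (real y)
        define d where "d = (r - x - y) / 2"
        have "x + y < r" using assms \<open>a = ereal x\<close> \<open>b = ereal y\<close> \<open>z = ereal r\<close> by simp
        then have "d > 0" by (simp add: d_def)
        then show ?thesis using \<open>a = ereal x\<close> \<open>b = ereal y\<close> \<open>z = ereal r\<close>
          by (intro exI[of _ "ereal (x + d)"] exI[of _ "ereal (y + d)"]) (simp add: d_def)
      next
        case PInf then show ?thesis using bn by simp
      next
        case MInf
        then show ?thesis using \<open>a = ereal x\<close> \<open>z = ereal r\<close> assms
          by (intro exI[of _ "ereal (x + 1)"] exI[of _ "ereal (r - x - 1)"]) simp
      qed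
    next
      case PInf then show ?thesis using an by simp
    next
      case MInf
      show ?thesis
      proof (cases b)
        case (real y)
        then show ?thesis using MInf \<open>z = ereal r\<close>
          by (intro exI[of _ "ereal (r - y - 1)"] exI[of _ "ereal (y + 1)"]) simp
      next
        case PInf then show ?thesis using bn by simp
      next
        case MInf
        then show ?thesis using \<open>a = -\<infinity>\<close> \<open>z = ereal r\<close>
          by (intro exI[of _ "ereal (r/2)"] exI[of _ "ereal (r/2)"]) simp
      qed
    qed
  qed
qed

lemma Limsup_add_le:
  fixes f g :: "'b \<Rightarrow> ereal"
  shows "Limsup F (\<lambda>x. f x + g x) \<le> Limsup F f + Limsup F g"
proof (rule dense_ge)
  fix z assume "Limsup F f + Limsup F g < z"
  then obtain a' b' where ab: "Limsup F f < a'" "Limsup F g < b'" "a' + b' \<le> z"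
    using ereal_split by blast
  have "eventually (\<lambda>x. f x < a') F" using Limsup_lessD[OF ab(1)] .
  moreover have "eventually (\<lambda>x. g x < b') F" using Limsup_lessD[OF ab(2)] .
  ultimately have "eventually (\<lambda>x. f x + g x \<le> z) F"
  proof eventually_elim
    case (elim x)
    then have "f x + g x \<le> a' + b'" by (intro add_mono) auto
    then show ?case using ab(3) by simp
  qed
  then show "Limsup F (\<lambda>x. f x + g x) \<le> z" by (rule Limsup_bounded)
qed

lemma Limsup_sum_le:
  fixes f :: "'i \<Rightarrow> 'b \<Rightarrow> ereal"
  assumes "finite I"
  shows "Limsup F (\<lambda>x. \<Sum>i\<in>I. f i x) \<le> (\<Sum>i\<in>I. Limsup F (f i))"
  using assms
proof (induction I rule: finite_induct)
  case empty
  then show ?case by (simp add: Limsup_bounded)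
next
  case (insert j I)
  have "Limsup F (\<lambda>x. \<Sum>i\<in>insert j I. f i x) = Limsup F (\<lambda>x. f j x + (\<Sum>i\<in>I. f i x))"
    using insert by simp
  also have "\<dots> \<le> Limsup F (f j) + Limsup F (\<lambda>x. \<Sum>i\<in>I. f i x)"
    by (rule Limsup_add_le)
  also have "\<dots> \<le> Limsup F (f j) + (\<Sum>i\<in>I. Limsup F (f i))"
    by (intro add_left_mono insert.IH)
  finally show ?case using insert by simp
qed

lemma INF_add_le2:
  fixes f :: "'x \<Rightarrow> ereal" and g :: "'y \<Rightarrow> ereal"
  assumes "\<And>x y. x \<in> S \<Longrightarrow> y \<in> T \<Longrightarrow> L \<le> f x + g y"
  shows "L \<le> (INF x\<in>S. f x) + (INF y\<in>T. g y)"
proof (rule dense_ge)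
  fix z assume "(INF x\<in>S. f x) + (INF y\<in>T. g y) < z"
  then obtain a' b' where ab: "(INF x\<in>S. f x) < a'" "(INF y\<in>T. g y) < b'" "a' + b' \<le> z"
    using ereal_split by blast
  obtain x where x: "x \<in> S" "f x < a'" using ab(1) by (auto simp: INF_less_iff)
  obtain y where y: "y \<in> T" "g y < b'" using ab(2) by (auto simp: INF_less_iff)
  have "L \<le> f x + g y" using assms x y by auto
  also have "\<dots> \<le> a' + b'" using x y by (intro add_mono) auto
  finally show "L \<le> z" using ab(3) by simp
qed

lemma INF_sum_le:
  fixes f :: "'i \<Rightarrow> 'x \<Rightarrow> ereal"
  assumes "finite I"
    and "\<And>x. (\<forall>i\<in>I. x i \<in> S i) \<Longrightarrow> L \<le> (\<Sum>i\<in>I. f i (x i))"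
  shows "L \<le> (\<Sum>i\<in>I. INF y\<in>S i. f i y)"
  using assms
proof (induction I arbitrary: L rule: finite_induct)
  case empty
  have "L \<le> (\<Sum>i\<in>{}. f i ((\<lambda>_. undefined) i))" by (rule empty.prems) simp
  then show ?case by simp
next
  case (insert j I)
  define T where "T = {x. \<forall>i\<in>I. x i \<in> S i}"
  have IH: "(INF x\<in>T. \<Sum>i\<in>I. f i (x i)) \<le> (\<Sum>i\<in>I. INF y\<in>S i. f i y)"
    by (rule insert.IH) (auto simp: T_def intro: INF_lower)
  have "L \<le> (INF y\<in>S j. f j y) + (INF x\<in>T. \<Sum>i\<in>I. f i (x i))"
  proof (rule INF_add_le2)
    fix y x assume y: "y \<in> S j" and x: "x \<in> T"
    have mem: "\<forall>i\<in>insert j I. (x(j := y)) i \<in> S i" using x y by (auto simp: T_def)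
    have "L \<le> (\<Sum>i\<in>insert j I. f i ((x(j := y)) i))"
      by (rule insert.prems[OF mem])
    also have "\<dots> = f j y + (\<Sum>i\<in>I. f i ((x(j := y)) i))"
      using insert.hyps by (simp add: sum.insert)
    also have "(\<Sum>i\<in>I. f i ((x(j := y)) i)) = (\<Sum>i\<in>I. f i (x i))"
      by (rule sum.cong) (use insert.hyps in auto)
    finally show "L \<le> f j y + (\<Sum>i\<in>I. f i (x i))" .
  qed
  also have "\<dots> \<le> (INF y\<in>S j. f j y) + (\<Sum>i\<in>I. INF y\<in>S i. f i y)"
    by (intro add_left_mono IH)
  finally show ?case using insert.hyps by simp
qed


definition hs :: "nat \<Rightarrow> cmat \<Rightarrow> cmat \<Rightarrow> real" where
  "hs k X Y = (\<Sum>a<k. \<Sum>b<k. (cmod (X a b - Y a b))\<^sup>2)"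

definition sdist :: "nat \<Rightarrow> cmat list \<Rightarrow> cmat list \<Rightarrow> real" where
  "sdist k xs ys = (\<Sum>j<length xs. hs k (xs ! j) (ys ! j))"

lemma tr_sq:
  assumes "msa k X" "msa k Y"
  shows "Re (mtr k (mmul k (msub X Y) (msub X Y))) = hs k X Y / real k"
proof -
  have diag: "mmul k (msub X Y) (msub X Y) a a = complex_of_real (\<Sum>b<k. (cmod (X a b - Y a b))\<^sup>2)"
    if a: "a < k" for a
  proof -
    have "mmul k (msub X Y) (msub X Y) a a = (\<Sum>b<k. (X a b - Y a b) * (X b a - Y b a))"
      using a unfolding mmul_def msub_def by (simp only: if_True conj_absorb)
    also have "\<dots> = (\<Sum>b<k. (X a b - Y a b) * cnj (X a b - Y a b))"
    proof (rule sum.cong)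
      fix b assume "b \<in> {..<k}"
      then have "X b a = cnj (X a b)" "Y b a = cnj (Y a b)"
        using assms a \<open>b \<in> {..<k}\<close> unfolding msa_def by blast+
      then show "(X a b - Y a b) * (X b a - Y b a) = (X a b - Y a b) * cnj (X a b - Y a b)"
        by simp
    qed simp
    also have "\<dots> = (\<Sum>b<k. complex_of_real ((cmod (X a b - Y a b))\<^sup>2))"
      by (rule sum.cong) (simp_all only: complex_norm_square)
    finally show ?thesis by (simp only: of_real_sum)
  qed
  have "(\<Sum>a<k. mmul k (msub X Y) (msub X Y) a a) = (\<Sum>a<k. complex_of_real (\<Sum>b<k. (cmod (X a b - Y a b))\<^sup>2))"
    by (rule sum.cong) (simp_all add: diag)
  also have "\<dots> = complex_of_real (hs k X Y)"
    unfolding hs_def by (simp only: of_real_sum)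
  finally have s: "(\<Sum>a<k. mmul k (msub X Y) (msub X Y) a a) = complex_of_real (hs k X Y)" .
  have "mtr k (mmul k (msub X Y) (msub X Y)) = complex_of_real (hs k X Y / real k)"
    unfolding mtr_def s by simp
  then show ?thesis by (simp only: Re_complex_of_real)
qed

lemma tdist_eq:
  assumes "length ys = length xs" "\<forall>x\<in>set xs. msa k x" "\<forall>y\<in>set ys. msa k y"
  shows "tdist k xs ys = sqrt (sdist k xs ys / real k)"
proof -
  have "(\<Sum>i<length xs. Re (mtr k (mmul k (msub (xs ! i) (ys ! i)) (msub (xs ! i) (ys ! i)))))
      = (\<Sum>i<length xs. hs k (xs ! i) (ys ! i) / real k)"
    by (rule sum.cong) (use assms in \<open>auto intro!: tr_sq\<close>)
  then show ?thesis unfolding tdist_def sdist_def by (simp add: sum_divide_distrib)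
qed

lemma sdist_L2:
  "sqrt (sdist k xs ys) = L2_set (\<lambda>(j,a,b). cmod ((xs ! j) a b - (ys ! j) a b)) ({..<length xs} \<times> {..<k} \<times> {..<k})"
  unfolding L2_set_def sdist_def hs_def
  by (simp add: sum.cartesian_product case_prod_beta)

lemma sdist_tri:
  assumes "length ys = length xs" "length zs = length xs"
  shows "sqrt (sdist k xs zs) \<le> sqrt (sdist k xs ys) + sqrt (sdist k ys zs)"
proof -
  let ?I = "{..<length xs} \<times> {..<k} \<times> {..<k}"
  have "sqrt (sdist k xs zs) = L2_set (\<lambda>(j,a,b). cmod ((xs ! j) a b - (zs ! j) a b)) ?I"
    by (rule sdist_L2)
  also have "\<dots> \<le> L2_set (\<lambda>p. (\<lambda>(j,a,b). cmod ((xs ! j) a b - (ys ! j) a b)) p + (\<lambda>(j,a,b). cmod ((ys ! j) a b - (zs ! j) a b)) p) ?I"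
  proof (rule L2_set_mono)
    fix p assume "p \<in> ?I"
    obtain j a b where p: "p = (j,a,b)" by (cases p) auto
    have "cmod ((xs ! j) a b - (zs ! j) a b) = cmod (((xs ! j) a b - (ys ! j) a b) + ((ys ! j) a b - (zs ! j) a b))"
      by simp
    also have "\<dots> \<le> cmod ((xs ! j) a b - (ys ! j) a b) + cmod ((ys ! j) a b - (zs ! j) a b)"
      by (rule norm_triangle_ineq)
    finally show "(\<lambda>(j,a,b). cmod ((xs ! j) a b - (zs ! j) a b)) p \<le> (\<lambda>(j,a,b). cmod ((xs ! j) a b - (ys ! j) a b)) p + (\<lambda>(j,a,b). cmod ((ys ! j) a b - (zs ! j) a b)) p"
      using p by simp
  qed (auto simp: case_prod_beta)
  also have "\<dots> \<le> L2_set (\<lambda>(j,a,b). cmod ((xs ! j) a b - (ys ! j) a b)) ?I + L2_set (\<lambda>(j,a,b). cmod ((ys ! j) a b - (zs ! j) a b)) ?I"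
    by (rule L2_set_triangle_ineq)
  also have "\<dots> = sqrt (sdist k xs ys) + sqrt (sdist k ys zs)"
    using sdist_L2[of k xs ys] sdist_L2[of k ys zs] assms by simp
  finally show ?thesis .
qed

lemma sdist_sym:
  assumes "length ys = length xs"
  shows "sdist k xs ys = sdist k ys xs"
  unfolding sdist_def hs_def using assms by (simp add: norm_minus_commute)

lemma sdist_self: "sdist k xs xs = 0"
  unfolding sdist_def hs_def by simp

definition okl :: "nat \<Rightarrow> nat \<Rightarrow> cmat list \<Rightarrow> bool" where
  "okl k L xs \<longleftrightarrow> length xs = L \<and> (\<forall>x\<in>set xs. msa k x)"

lemma tdist_tri:
  assumes "okl k L xs" "okl k L ys" "okl k L zs"
  shows "tdist k xs zs \<le> tdist k xs ys + tdist k ys zs"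
proof -
  have e: "tdist k us vs = sqrt (sdist k us vs) / sqrt (real k)" if "okl k L us" "okl k L vs" for us vs
    using that by (simp add: okl_def tdist_eq real_sqrt_divide)
  have "sqrt (sdist k xs zs) / sqrt (real k) \<le> (sqrt (sdist k xs ys) + sqrt (sdist k ys zs)) / sqrt (real k)"
    by (rule divide_right_mono) (use assms sdist_tri in \<open>auto simp: okl_def\<close>)
  then show ?thesis using assms by (simp add: e add_divide_distrib)
qed

lemma tdist_sym:
  assumes "okl k L xs" "okl k L ys"
  shows "tdist k xs ys = tdist k ys xs"
  using assms by (simp add: okl_def tdist_eq sdist_sym)

lemma tdist_self:
  assumes "okl k L xs"
  shows "tdist k xs xs = 0"
  using assms by (simp add: okl_def tdist_eq sdist_self)

definition off :: "'a list list \<Rightarrow> nat \<Rightarrow> nat" where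
  "off Zs i = length (concat (take i Zs))"

definition proj :: "'a list list \<Rightarrow> nat \<Rightarrow> 'b list \<Rightarrow> 'b list" where
  "proj Zs i xs = take (length (Zs ! i)) (drop (off Zs i) xs)"

lemma off_bound:
  assumes "i < length Zs"
  shows "off Zs i + length (Zs ! i) \<le> length (concat Zs)"
proof -
  have "length (concat Zs) = length (concat (take (Suc i) Zs)) + length (concat (drop (Suc i) Zs))"
    by (subst append_take_drop_id[symmetric, of Zs "Suc i"], subst concat_append) simp
  moreover have "take (Suc i) Zs = take i Zs @ [Zs ! i]"
    using assms by (simp add: take_Suc_conv_app_nth)
  ultimately show ?thesis unfolding off_def by simp
qed

lemma concat_nth_off:
  assumes "i < length Zs" "j < length (Zs ! i)"
  shows "concat Zs ! (off Zs i + j) = Zs ! i ! j"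
proof -
  have "concat Zs = concat (take i Zs) @ (Zs ! i) @ concat (drop (Suc i) Zs)"
    using id_take_nth_drop[OF assms(1)] by (metis concat.simps(2) concat_append)
  then show ?thesis using assms(2) unfolding off_def by (simp add: nth_append)
qed

lemma length_proj:
  assumes "i < length Zs" "length xs = length (concat Zs)"
  shows "length (proj Zs i xs) = length (Zs ! i)"
  using off_bound[OF assms(1)] assms(2) unfolding proj_def by simp

lemma nth_proj:
  assumes "i < length Zs" "length xs = length (concat Zs)" "j < length (Zs ! i)"
  shows "proj Zs i xs ! j = xs ! (off Zs i + j)"
  using off_bound[OF assms(1)] assms unfolding proj_def by simp

lemma set_proj: "set (proj Zs i xs) \<subseteq> set xs"
  unfolding proj_def by (meson dual_order.trans set_drop_subset set_take_subset)

lemma sum_lessThan_add: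
  fixes h :: "nat \<Rightarrow> 'c::comm_monoid_add"
  shows "(\<Sum>j<a + b. h j) = (\<Sum>j<a. h j) + (\<Sum>j<b. h (a + j))"
  by (induction b) (simp_all add: add.assoc)

lemma sum_concat_split:
  fixes h :: "nat \<Rightarrow> 'c::comm_monoid_add"
  shows "(\<Sum>j<length (concat Zs). h j) = (\<Sum>i<length Zs. \<Sum>j<length (Zs ! i). h (off Zs i + j))"
proof (induction Zs rule: rev_induct)
  case Nil
  then show ?case by simp
next
  case (snoc Z Zs)
  have o: "off (Zs @ [Z]) i = off Zs i" if "i < length Zs" for i
    using that unfolding off_def by simp
  have n: "(Zs @ [Z]) ! i = Zs ! i" if "i < length Zs" for i
    using that by (simp add: nth_append)
  have "(\<Sum>i<length (Zs @ [Z]). \<Sum>j<length ((Zs @ [Z]) ! i). h (off (Zs @ [Z]) i + j))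
      = (\<Sum>i<length Zs. \<Sum>j<length ((Zs @ [Z]) ! i). h (off (Zs @ [Z]) i + j))
        + (\<Sum>j<length Z. h (length (concat Zs) + j))"
    by (simp add: off_def)
  also have "(\<Sum>i<length Zs. \<Sum>j<length ((Zs @ [Z]) ! i). h (off (Zs @ [Z]) i + j))
      = (\<Sum>i<length Zs. \<Sum>j<length (Zs ! i). h (off Zs i + j))"
    by (rule sum.cong) (simp_all add: o n)
  finally show ?case using snoc.IH by (simp add: sum_lessThan_add)
qed

lemma sdist_split:
  assumes "length xs = length (concat Zs)" "length ys = length (concat Zs)"
  shows "sdist k xs ys = (\<Sum>i<length Zs. sdist k (proj Zs i xs) (proj Zs i ys))"
proof -
  have "sdist k xs ys = (\<Sum>i<length Zs. \<Sum>j<length (Zs ! i). hs k (xs ! (off Zs i + j)) (ys ! (off Zs i + j)))"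
    unfolding sdist_def assms(1) by (rule sum_concat_split)
  also have "\<dots> = (\<Sum>i<length Zs. sdist k (proj Zs i xs) (proj Zs i ys))"
  proof (rule sum.cong)
    fix i assume i: "i \<in> {..<length Zs}"
    show "(\<Sum>j<length (Zs ! i). hs k (xs ! (off Zs i + j)) (ys ! (off Zs i + j))) = sdist k (proj Zs i xs) (proj Zs i ys)"
      unfolding sdist_def using i assms by (simp add: length_proj nth_proj)
  qed simp
  finally show ?thesis .
qed

lemma foldr_shift:
  assumes "\<forall>j\<in>set u. ws ! j = ws' ! (c + j)"
  shows "foldr (\<lambda>i. F (ws ! i)) u e = foldr (\<lambda>i. F (ws' ! i)) (map ((+) c) u) e"
  using assms by (induction u) auto

lemma Gamma_proj_mem:
  assumes xs: "xs \<in> Gamma (vmom A \<phi> (concat Zs)) (length (concat Zs)) R m k \<gamma>"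
    and i: "i < length Zs" and mi: "mi \<le> m" and gi: "\<gamma> \<le> \<gamma>i"
  shows "proj Zs i xs \<in> Gamma (vmom A \<phi> (Zs ! i)) (length (Zs ! i)) R mi k \<gamma>i"
proof -
  have len: "length xs = length (concat Zs)" using xs by (simp add: Gamma_def)
  have ob: "off Zs i + length (Zs ! i) \<le> length (concat Zs)" by (rule off_bound[OF i])
  have "length (proj Zs i xs) = length (Zs ! i)" by (rule length_proj[OF i len])
  moreover have "\<forall>x\<in>set (proj Zs i xs). msa k x \<and> mopnorm k x \<le> R"
    using xs set_proj[of Zs i xs] by (auto simp: Gamma_def)
  moreover have "cmod (mtr k (mword k (proj Zs i xs) u) - vmom A \<phi> (Zs ! i) u) < \<gamma>i"
    if u: "1 \<le> length u" "length u \<le> mi" "set u \<subseteq> {..<length (Zs ! i)}" for u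
  proof -
    define u' where "u' = map ((+) (off Zs i)) u"
    have "set u' \<subseteq> {..<length (concat Zs)}" using u ob unfolding u'_def by auto
    moreover have "1 \<le> length u'" "length u' \<le> m" using u mi unfolding u'_def by auto
    ultimately have lt: "cmod (mtr k (mword k xs u') - vmom A \<phi> (concat Zs) u') < \<gamma>"
      using xs by (auto simp: Gamma_def)
    have "mword k (proj Zs i xs) u = mword k xs u'"
      unfolding mword_def u'_def
      by (rule foldr_shift[where F="mmul k"]) (use u i len in \<open>auto simp: nth_proj\<close>)
    moreover have "vmom A \<phi> (Zs ! i) u = vmom A \<phi> (concat Zs) u'"
      unfolding vmom_def u'_def
      by (rule arg_cong[where f=\<phi>], rule foldr_shift[where F="vmul A"]) (use u i in \<open>auto simp: concat_nth_off\<close>)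
    ultimately show ?thesis using lt gi by simp
  qed
  ultimately show ?thesis unfolding Gamma_def by blast
qed


definition ispack :: "('b \<Rightarrow> 'b \<Rightarrow> real) \<Rightarrow> 'b set \<Rightarrow> real \<Rightarrow> 'b set \<Rightarrow> bool" where
  "ispack d X \<epsilon> C \<longleftrightarrow> finite C \<and> C \<subseteq> X \<and>
     (\<forall>c\<in>C. \<forall>c'\<in>C. c \<noteq> c' \<longrightarrow> {y\<in>X. d c y < \<epsilon>} \<inter> {y\<in>X. d c' y < \<epsilon>} = {})"

lemma packing_num_alt: "packing_num d X \<epsilon> = Sup {enat (card C) | C. ispack d X \<epsilon> C}"
  unfolding packing_num_def ispack_def by simp

lemma sum_ereal_PInf:
  fixes f :: "nat \<Rightarrow> ereal"
  assumes "i < n" "f i = \<infinity>"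
  shows "(\<Sum>j<n. f j) = \<infinity>"
proof -
  have "(\<Sum>j<n. f j) = f i + (\<Sum>j\<in>{..<n} - {i}. f j)"
    using assms(1) by (simp add: sum.remove)
  then show ?thesis using assms(2) by simp
qed

lemma pack_max:
  assumes "packing_num d Y \<delta> = enat q"
  shows "\<exists>D. ispack d Y \<delta> D \<and> card D = q \<and> (\<forall>C. ispack d Y \<delta> C \<longrightarrow> card C \<le> q)"
proof -
  define S where "S = {enat (card C) | C. ispack d Y \<delta> C}"
  have SS: "Sup S = enat q" using assms by (simp add: packing_num_alt S_def)
  have "ispack d Y \<delta> {}" by (simp add: ispack_def)
  then have ne: "S \<noteq> {}" unfolding S_def by blast
  have fin: "finite S"
  proof (rule ccontr)
    assume "\<not> finite S"
    then have "Sup S = \<infinity>" using ne by (simp add: Sup_enat_def)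
    then show False using SS by simp
  qed
  have "Sup S = Max S" using ne fin by (simp add: Sup_enat_def)
  then have "enat q \<in> S" using Max_in[OF fin ne] SS by simp
  then obtain D where D: "ispack d Y \<delta> D" "card D = q" unfolding S_def by auto
  have "card C \<le> q" if "ispack d Y \<delta> C" for C
  proof -
    have "enat (card C) \<in> S" using that unfolding S_def by blast
    then have "enat (card C) \<le> Sup S" by (rule Sup_upper)
    then show ?thesis using SS by simp
  qed
  then show ?thesis using D by blast
qed

lemma pack_cover:
  assumes D: "ispack d Y \<delta> D" "\<forall>C. ispack d Y \<delta> C \<longrightarrow> card C \<le> card D"
    and tri: "\<And>x y z. x \<in> Y \<Longrightarrow> y \<in> Y \<Longrightarrow> z \<in> Y \<Longrightarrow> d x z \<le> d x y + d y z"
    and sym: "\<And>x y. x \<in> Y \<Longrightarrow> y \<in> Y \<Longrightarrow> d x y = d y x"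
    and self: "\<And>x. x \<in> Y \<Longrightarrow> d x x = 0"
    and \<delta>: "\<delta> > 0" and x: "x \<in> Y"
  shows "\<exists>c\<in>D. d x c < 2 * \<delta>"
proof (cases "x \<in> D")
  case True
  then show ?thesis using self[OF x] \<delta> by (intro bexI[of _ x]) auto
next
  case False
  have finD: "finite D" and DY: "D \<subseteq> Y" using D(1) by (auto simp: ispack_def)
  have "card (insert x D) = card D + 1" using False finD by simp
  then have "\<not> ispack d Y \<delta> (insert x D)" using D(2) by fastforce
  then obtain c c' where cc: "c \<in> insert x D" "c' \<in> insert x D" "c \<noteq> c'"
      "{y\<in>Y. d c y < \<delta>} \<inter> {y\<in>Y. d c' y < \<delta>} \<noteq> {}"
    using finD DY x unfolding ispack_def by auto
  then obtain y where y: "y \<in> Y" "d c y < \<delta>" "d c' y < \<delta>" by blast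
  have "\<not> (c \<in> D \<and> c' \<in> D)" using D(1) cc unfolding ispack_def by blast
  then have "\<exists>e\<in>D. d x y < \<delta> \<and> d e y < \<delta>"
    using cc y by auto
  then obtain e where e: "e \<in> D" "d x y < \<delta>" "d e y < \<delta>" by blast
  have eY: "e \<in> Y" using e DY by auto
  have "d x e \<le> d x y + d y e" by (rule tri[OF x y(1) eY])
  also have "d y e = d e y" using sym[OF y(1) eY] .
  finally show ?thesis using e by (intro bexI[of _ e]) auto
qed

lemma packing_core:
  fixes d :: "'b \<Rightarrow> 'b \<Rightarrow> real" and X :: "'b set" and Xs :: "nat \<Rightarrow> 'b set"
    and pr :: "nat \<Rightarrow> 'b \<Rightarrow> 'b"
  assumes n: "n \<ge> 1" and \<delta>: "\<delta> > 0"
    and prX: "\<And>x i. x \<in> X \<Longrightarrow> i < n \<Longrightarrow> pr i x \<in> Xs i"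
    and tri: "\<And>i x y z. i < n \<Longrightarrow> x \<in> Xs i \<Longrightarrow> y \<in> Xs i \<Longrightarrow> z \<in> Xs i \<Longrightarrow> d x z \<le> d x y + d y z"
    and sym: "\<And>i x y. i < n \<Longrightarrow> x \<in> Xs i \<Longrightarrow> y \<in> Xs i \<Longrightarrow> d x y = d y x"
    and self: "\<And>i x. i < n \<Longrightarrow> x \<in> Xs i \<Longrightarrow> d x x = 0"
    and selfX: "\<And>x. x \<in> X \<Longrightarrow> d x x = 0"
    and comb: "\<And>x y. x \<in> X \<Longrightarrow> y \<in> X \<Longrightarrow> (\<forall>i<n. d (pr i x) (pr i y) < 4 * \<delta>) \<Longrightarrow> d x y < \<epsilon>"
  shows "eln_enat (packing_num d X \<epsilon>) \<le> (\<Sum>i<n. eln_enat (packing_num d (Xs i) \<delta>))"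
proof (cases "\<exists>i<n. packing_num d (Xs i) \<delta> = \<infinity>")
  case True
  then obtain i where "i < n" "packing_num d (Xs i) \<delta> = \<infinity>" by blast
  then have "(\<Sum>i<n. eln_enat (packing_num d (Xs i) \<delta>)) = \<infinity>"
    by (intro sum_ereal_PInf[of i]) (auto simp: eln_enat_def)
  then show ?thesis by simp
next
  case False
  then have "\<forall>i<n. \<exists>q. packing_num d (Xs i) \<delta> = enat q" by auto
  then obtain q where q: "\<And>i. i < n \<Longrightarrow> packing_num d (Xs i) \<delta> = enat (q i)" by metis
  show ?thesis
  proof (cases "\<exists>i<n. q i = 0")
    case True
    then obtain i where i: "i < n" "q i = 0" by blast
    have "Xs i = {}"
    proof (rule ccontr)
      assume "Xs i \<noteq> {}"
      then obtain x where "x \<in> Xs i" by blast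
      then have "ispack d (Xs i) \<delta> {x}" by (simp add: ispack_def)
      then have "enat (card {x}) \<le> packing_num d (Xs i) \<delta>"
        unfolding packing_num_alt by (intro Sup_upper) blast
      then show False using q[OF i(1)] i(2) by (simp add: one_enat_def)
    qed
    then have "X = {}" using prX i(1) by blast
    then have "{enat (card C) | C. ispack d X \<epsilon> C} = {enat 0}"
      by (auto simp: ispack_def)
    then have "packing_num d X \<epsilon> = 0" by (simp add: packing_num_alt zero_enat_def)
    then show ?thesis by (simp add: eln_enat_def)
  next
    case False
    then have qpos: "\<And>i. i < n \<Longrightarrow> q i \<ge> 1" by (simp add: Suc_le_eq)
    have "\<forall>i<n. \<exists>D. ispack d (Xs i) \<delta> D \<and> card D = q i \<and> (\<forall>C. ispack d (Xs i) \<delta> C \<longrightarrow> card C \<le> q i)"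
      using pack_max q by blast
    then obtain D where D: "\<And>i. i < n \<Longrightarrow> ispack d (Xs i) \<delta> (D i) \<and> card (D i) = q i \<and> (\<forall>C. ispack d (Xs i) \<delta> C \<longrightarrow> card C \<le> q i)"
      by metis
    have cover: "\<exists>c\<in>D i. d x c < 2 * \<delta>" if "i < n" "x \<in> Xs i" for i x
      using D[OF that(1)] that by (intro pack_cover[where Y="Xs i"]) (auto intro: tri sym self \<delta>)
    have bound: "card C \<le> (\<Prod>i<n. q i)" if C: "ispack d X \<epsilon> C" for C
    proof -
      define F where "F = (\<lambda>c. \<lambda>i\<in>{..<n}. SOME e. e \<in> D i \<and> d (pr i c) e < 2 * \<delta>)"
      have Fp: "F c i \<in> D i \<and> d (pr i c) (F c i) < 2 * \<delta>" if "c \<in> C" "i < n" for c i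
      proof -
        have "c \<in> X" using C that(1) by (auto simp: ispack_def)
        then have "\<exists>e. e \<in> D i \<and> d (pr i c) e < 2 * \<delta>" using cover[OF that(2) prX[OF _ that(2)]] by blast
        then have "(SOME e. e \<in> D i \<and> d (pr i c) e < 2 * \<delta>) \<in> D i \<and> d (pr i c) (SOME e. e \<in> D i \<and> d (pr i c) e < 2 * \<delta>) < 2 * \<delta>"
          by (rule someI_ex)
        then show ?thesis unfolding F_def using that(2) by simp
      qed
      have FC: "F ` C \<subseteq> PiE {..<n} D"
        using Fp by (auto simp: F_def PiE_def extensional_def)
      have inj: "inj_on F C"
      proof (rule inj_onI, rule ccontr)
        fix c c' assume c: "c \<in> C" "c' \<in> C" "F c = F c'" "c \<noteq> c'"
        have cX: "c \<in> X" "c' \<in> X" using C c by (auto simp: ispack_def)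
        have "\<forall>i<n. d (pr i c) (pr i c') < 4 * \<delta>"
        proof (intro allI impI)
          fix i assume i: "i < n"
          have e: "F c i \<in> D i" "d (pr i c) (F c i) < 2 * \<delta>" "d (pr i c') (F c i) < 2 * \<delta>"
            using Fp[OF c(1) i] Fp[OF c(2) i] c(3) by auto
          have eX: "F c i \<in> Xs i" using e(1) D[OF i] by (auto simp: ispack_def)
          have "d (pr i c) (pr i c') \<le> d (pr i c) (F c i) + d (F c i) (pr i c')"
            by (rule tri[OF i prX[OF cX(1) i] eX prX[OF cX(2) i]])
          also have "d (F c i) (pr i c') = d (pr i c') (F c i)"
            by (rule sym[OF i eX prX[OF cX(2) i]])
          finally show "d (pr i c) (pr i c') < 4 * \<delta>" using e by simp
        qed
        then have "d c c' < \<epsilon>" by (rule comb[OF cX])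
        moreover have "d c' c' < \<epsilon>"
          by (rule comb[OF cX(2) cX(2)]) (use self prX[OF cX(2)] \<delta> in auto)
        ultimately have "c' \<in> {y\<in>X. d c y < \<epsilon>} \<inter> {y\<in>X. d c' y < \<epsilon>}" using cX by blast
        then show False using C c unfolding ispack_def by blast
      qed
      have "card C \<le> card (PiE {..<n} D)"
        by (rule card_inj_on_le[OF inj FC]) (use D in \<open>auto intro!: finite_PiE simp: ispack_def\<close>)
      also have "\<dots> = (\<Prod>i<n. card (D i))" by (simp add: card_PiE)
      also have "\<dots> = (\<Prod>i<n. q i)" using D by simp
      finally show ?thesis .
    qed
    have pn: "packing_num d X \<epsilon> \<le> enat (\<Prod>i<n. q i)"
      unfolding packing_num_alt by (rule Sup_least) (auto intro: bound)
    have prodpos: "(\<Prod>i<n. q i) \<ge> 1"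
      using qpos by (metis lessThan_iff prod_ge_1)
    have "eln_enat (packing_num d X \<epsilon>) \<le> ereal (ln (real (\<Prod>i<n. q i)))"
    proof (cases "packing_num d X \<epsilon> = 0")
      case True then show ?thesis by (simp add: eln_enat_def)
    next
      case False
      then obtain p where p: "packing_num d X \<epsilon> = enat p" "p \<ge> 1" "p \<le> (\<Prod>i<n. q i)"
        using pn by (cases "packing_num d X \<epsilon>") (auto simp: zero_enat_def)
      have "real p \<le> real (\<Prod>i<n. q i)" using p(3) by (simp only: of_nat_le_iff)
      then have "ln (real p) \<le> ln (real (\<Prod>i<n. q i))" using p(2)
        by (subst ln_le_cancel_iff) auto
      then show ?thesis using p(1,2) by (simp add: eln_enat_def zero_enat_def del: of_nat_prod)
    qed
    also have "ln (real (\<Prod>i<n. q i)) = ln (\<Prod>i<n. real (q i))" by (simp only: of_nat_prod)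
    also have "\<dots> = (\<Sum>i<n. ln (real (q i)))"
      by (rule ln_prod) (use qpos in \<open>auto simp: Suc_le_eq\<close>)
    also have "ereal (\<Sum>i<n. ln (real (q i))) = (\<Sum>i<n. ereal (ln (real (q i))))"
      by (rule sum_ereal[symmetric])
    also have "\<dots> = (\<Sum>i<n. eln_enat (packing_num d (Xs i) \<delta>))"
    proof (rule sum.cong)
      fix i assume "i \<in> {..<n}"
      then have "q i \<noteq> 0" "packing_num d (Xs i) \<delta> = enat (q i)" using q qpos by (auto simp: Suc_le_eq)
      then show "ereal (ln (real (q i))) = eln_enat (packing_num d (Xs i) \<delta>)"
        by (simp add: eln_enat_def zero_enat_def)
    qed simp
    finally show ?thesis by simp
  qed
qed

lemma sdist_nonneg: "sdist k xs ys \<ge> 0"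
  unfolding sdist_def hs_def by (intro sum_nonneg) auto

lemma Gamma_okl: "xs \<in> Gamma \<mu> L R m k \<gamma> \<Longrightarrow> okl k L xs"
  unfolding Gamma_def okl_def by auto

lemma sqrt_less_sq:
  assumes "sqrt a < b" "a \<ge> 0"
  shows "a < b\<^sup>2"
proof -
  have "b > 0" using assms by (meson le_less_trans real_sqrt_ge_zero)
  have "(sqrt a)\<^sup>2 < b\<^sup>2" using assms by (intro power_strict_mono) auto
  then show ?thesis using assms(2) by simp
qed

lemma packing_k:
  fixes A :: "'a wstar_alg" and Zs :: "'a list list"
  assumes Zs: "Zs \<noteq> []" and \<epsilon>: "\<epsilon> > 0"
    and mi: "\<And>i. i < length Zs \<Longrightarrow> mi i \<le> m" and gi: "\<And>i. i < length Zs \<Longrightarrow> \<gamma> \<le> \<gamma>i i"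
  shows "eln_enat (packing_num (tdist k) (Gamma (vmom A \<phi> (concat Zs)) (length (concat Zs)) R m k \<gamma>) \<epsilon>)
    \<le> (\<Sum>i<length Zs. eln_enat (packing_num (tdist k)
          (Gamma (vmom A \<phi> (Zs ! i)) (length (Zs ! i)) R (mi i) k (\<gamma>i i)) (\<epsilon> / (4 * sqrt (real (length Zs))))))"
proof -
  define n where "n = length Zs"
  have n: "n \<ge> 1" using Zs by (simp add: n_def Suc_le_eq)
  define \<delta> where "\<delta> = \<epsilon> / (4 * sqrt (real n))"
  have \<delta>: "\<delta> > 0" using n \<epsilon> by (simp add: \<delta>_def)
  have four: "4 * \<delta> = \<epsilon> / sqrt (real n)" using n by (simp add: \<delta>_def)
  define X where "X = Gamma (vmom A \<phi> (concat Zs)) (length (concat Zs)) R m k \<gamma>"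
  define Xs where "Xs = (\<lambda>i. Gamma (vmom A \<phi> (Zs ! i)) (length (Zs ! i)) R (mi i) k (\<gamma>i i))"
  have "eln_enat (packing_num (tdist k) X \<epsilon>) \<le> (\<Sum>i<n. eln_enat (packing_num (tdist k) (Xs i) \<delta>))"
  proof (rule packing_core[where pr = "proj Zs"])
    show "1 \<le> n" by (rule n)
    show "0 < \<delta>" by (rule \<delta>)
    show "proj Zs i x \<in> Xs i" if "x \<in> X" "i < n" for x i
      using that Gamma_proj_mem[OF _ _ mi gi] by (simp add: X_def Xs_def n_def)
    show "tdist k x z \<le> tdist k x y + tdist k y z" if "i < n" "x \<in> Xs i" "y \<in> Xs i" "z \<in> Xs i" for i x y z
      using that by (intro tdist_tri) (auto simp: Xs_def intro: Gamma_okl)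
    show "tdist k x y = tdist k y x" if "i < n" "x \<in> Xs i" "y \<in> Xs i" for i x y
      using that by (intro tdist_sym) (auto simp: Xs_def intro: Gamma_okl)
    show "tdist k x x = 0" if "i < n" "x \<in> Xs i" for i x
      using that by (intro tdist_self) (auto simp: Xs_def intro: Gamma_okl)
    show "tdist k x x = 0" if "x \<in> X" for x
      using that by (intro tdist_self) (auto simp: X_def intro: Gamma_okl)
    show "tdist k x y < \<epsilon>" if xy: "x \<in> X" "y \<in> X" and lt: "\<forall>i<n. tdist k (proj Zs i x) (proj Zs i y) < 4 * \<delta>" for x y
    proof -
      have okx: "okl k (length (concat Zs)) x" and oky: "okl k (length (concat Zs)) y"
        using xy by (auto simp: X_def intro: Gamma_okl)
      have pin: "proj Zs i x \<in> Xs i" "proj Zs i y \<in> Xs i" if "i < n" for i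
        using that xy Gamma_proj_mem[OF _ _ mi gi] by (auto simp: X_def Xs_def n_def)
      have each: "sdist k (proj Zs i x) (proj Zs i y) / real k < \<epsilon>\<^sup>2 / real n" if i: "i < n" for i
      proof -
        have "okl k (length (Zs ! i)) (proj Zs i x)" "okl k (length (Zs ! i)) (proj Zs i y)"
          using pin[OF i] by (auto simp: Xs_def intro: Gamma_okl)
        then have "tdist k (proj Zs i x) (proj Zs i y) = sqrt (sdist k (proj Zs i x) (proj Zs i y) / real k)"
          by (intro tdist_eq) (auto simp: okl_def)
        then have "sqrt (sdist k (proj Zs i x) (proj Zs i y) / real k) < \<epsilon> / sqrt (real n)"
          using lt[rule_format, OF i] four by simp
        then have "sdist k (proj Zs i x) (proj Zs i y) / real k < (\<epsilon> / sqrt (real n))\<^sup>2"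
          by (rule sqrt_less_sq) (simp add: sdist_nonneg)
        then show ?thesis using n by (simp add: power_divide)
      qed
      have "sdist k x y / real k = (\<Sum>i<n. sdist k (proj Zs i x) (proj Zs i y) / real k)"
        using okx oky by (simp add: sdist_split[of x Zs y k] okl_def n_def sum_divide_distrib)
      also have "\<dots> < (\<Sum>i<n. \<epsilon>\<^sup>2 / real n)"
        using n by (intro sum_strict_mono each) (auto simp: lessThan_empty_iff)
      also have "\<dots> = \<epsilon>\<^sup>2" using n by simp
      finally have "sqrt (sdist k x y / real k) < sqrt (\<epsilon>\<^sup>2)" by (simp only: real_sqrt_less_iff)
      then show ?thesis using okx oky \<epsilon> by (simp add: tdist_eq okl_def)
    qed
  qed
  then show ?thesis by (simp add: X_def Xs_def n_def \<delta>_def)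
qed


lemma ereal_cmult_add:
  assumes "c \<ge> 0"
  shows "ereal c * (a + b) = ereal c * a + ereal c * b"
proof (cases "c = 0")
  case True then show ?thesis by (simp add: zero_ereal_def[symmetric])
next
  case False
  then have "c > 0" using assms by simp
  then show ?thesis by (cases a; cases b) (simp_all add: distrib_left)
qed

lemma ereal_cmult_sum:
  assumes "c \<ge> 0"
  shows "ereal c * (\<Sum>i\<in>I. f i) = (\<Sum>i\<in>I. ereal c * f i)"
proof (cases "finite I")
  case True
  then show ?thesis
    by (induction I rule: finite_induct) (simp_all add: ereal_cmult_add[OF assms])
qed simp

lemma Limsup_scale:
  fixes g :: "real \<Rightarrow> ereal"
  assumes c: "c > 0"
  shows "Limsup (at_right 0) (\<lambda>\<epsilon>. g (\<epsilon> / c)) = Limsup (at_right 0) g"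
proof -
  have inj: "inj (times (inverse c))" using c by (auto simp: inj_on_def)
  have "Limsup (at_right 0) (\<lambda>\<epsilon>. g (\<epsilon> / c)) = Limsup (at_right 0) (\<lambda>\<epsilon>. g (times (inverse c) \<epsilon>))"
    by (simp add: divide_inverse_commute)
  also have "\<dots> = Limsup (filtermap (times (inverse c)) (at_right 0)) g"
    by (rule Limsup_filtermap_eq[OF inj, symmetric])
  also have "filtermap (times (inverse c)) (at_right 0) = at_right (inverse c * 0)"
    using c by (intro filtermap_times_pos_at_right) simp
  finally show ?thesis by simp
qed


lemma P_mg_le:
  fixes A :: "'a wstar_alg" and Zs :: "'a list list"
  assumes Zs: "Zs \<noteq> []" and \<epsilon>: "\<epsilon> > 0"
    and mi: "\<And>i. i < length Zs \<Longrightarrow> mi i \<le> m" and gi: "\<And>i. i < length Zs \<Longrightarrow> \<gamma> \<le> \<gamma>i i"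
  shows "P_eps_R_mg (vmom A \<phi> (concat Zs)) (length (concat Zs)) \<epsilon> R m \<gamma>
    \<le> (\<Sum>i<length Zs. P_eps_R_mg (vmom A \<phi> (Zs ! i)) (length (Zs ! i)) (\<epsilon> / (4 * sqrt (real (length Zs)))) R (mi i) (\<gamma>i i))"
proof -
  let ?\<delta> = "\<epsilon> / (4 * sqrt (real (length Zs)))"
  let ?a = "\<lambda>k. ereal (1 / (real k)\<^sup>2) * eln_enat (packing_num (tdist k) (Gamma (vmom A \<phi> (concat Zs)) (length (concat Zs)) R m k \<gamma>) \<epsilon>)"
  let ?b = "\<lambda>i k. ereal (1 / (real k)\<^sup>2) * eln_enat (packing_num (tdist k) (Gamma (vmom A \<phi> (Zs ! i)) (length (Zs ! i)) R (mi i) k (\<gamma>i i)) ?\<delta>)"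
  have "\<And>k. ?a k \<le> (\<Sum>i<length Zs. ?b i k)"
  proof -
    fix k
    have "?a k \<le> ereal (1 / (real k)\<^sup>2) * (\<Sum>i<length Zs. eln_enat (packing_num (tdist k) (Gamma (vmom A \<phi> (Zs ! i)) (length (Zs ! i)) R (mi i) k (\<gamma>i i)) ?\<delta>))"
      by (intro ereal_mult_left_mono packing_k[OF Zs \<epsilon> mi gi]) auto
    also have "\<dots> = (\<Sum>i<length Zs. ?b i k)"
      by (rule ereal_cmult_sum) simp
    finally show "?a k \<le> (\<Sum>i<length Zs. ?b i k)" .
  qed
  then have "limsup ?a \<le> limsup (\<lambda>k. \<Sum>i<length Zs. ?b i k)"
    by (intro Limsup_mono) simp
  also have "\<dots> \<le> (\<Sum>i<length Zs. limsup (?b i))"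
    by (rule Limsup_sum_le) simp
  finally show ?thesis unfolding P_eps_R_mg_def .
qed

lemma P_R_le:
  fixes A :: "'a wstar_alg" and Zs :: "'a list list"
  assumes Zs: "Zs \<noteq> []" and \<epsilon>: "\<epsilon> > 0"
  shows "P_eps_R (vmom A \<phi> (concat Zs)) (length (concat Zs)) \<epsilon> R
    \<le> (\<Sum>i<length Zs. P_eps_R (vmom A \<phi> (Zs ! i)) (length (Zs ! i)) (\<epsilon> / (4 * sqrt (real (length Zs)))) R)"
proof -
  let ?\<delta> = "\<epsilon> / (4 * sqrt (real (length Zs)))"
  let ?n = "length Zs"
  define S where "S = {1::nat..} \<times> {0::real<..}"
  define f where "f = (\<lambda>i p. P_eps_R_mg (vmom A \<phi> (Zs ! i)) (length (Zs ! i)) ?\<delta> R (fst p) (snd p))"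
  have ne: "{..<?n} \<noteq> {}" using Zs by (simp add: lessThan_empty_iff)
  have "P_eps_R (vmom A \<phi> (concat Zs)) (length (concat Zs)) \<epsilon> R \<le> (\<Sum>i<?n. INF p\<in>S. f i p)"
  proof (rule INF_sum_le)
    fix x assume x: "\<forall>i\<in>{..<?n}. x i \<in> S"
    define m where "m = Max ((fst \<circ> x) ` {..<?n})"
    define \<gamma> where "\<gamma> = Min ((snd \<circ> x) ` {..<?n})"
    have mi: "fst (x i) \<le> m" if "i < ?n" for i
      unfolding m_def using that by (intro Max_ge) auto
    have gi: "\<gamma> \<le> snd (x i)" if "i < ?n" for i
      unfolding \<gamma>_def using that by (intro Min_le) auto
    have x0: "x 0 \<in> S" using x Zs by auto
    have m1: "m \<ge> 1" using mi[of 0] x0 Zs by (auto simp: S_def mem_Times_iff)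
    have xs: "snd (x i) > 0" if "i < ?n" for i using x that by (auto simp: S_def mem_Times_iff)
    have g0: "\<gamma> > 0" unfolding \<gamma>_def using xs ne by (subst Min_gr_iff) auto
    have "P_eps_R (vmom A \<phi> (concat Zs)) (length (concat Zs)) \<epsilon> R
        \<le> P_eps_R_mg (vmom A \<phi> (concat Zs)) (length (concat Zs)) \<epsilon> R m \<gamma>"
      unfolding P_eps_R_def using m1 g0 by (intro INF_lower2[of m] INF_lower2[of \<gamma>]) auto
    also have "\<dots> \<le> (\<Sum>i<?n. P_eps_R_mg (vmom A \<phi> (Zs ! i)) (length (Zs ! i)) ?\<delta> R (fst (x i)) (snd (x i)))"
      by (rule P_mg_le[OF Zs \<epsilon>]) (use mi gi in auto)
    finally show "P_eps_R (vmom A \<phi> (concat Zs)) (length (concat Zs)) \<epsilon> R \<le> (\<Sum>i\<in>{..<?n}. f i (x i))"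
      by (simp add: f_def)
  qed simp
  also have "\<dots> \<le> (\<Sum>i<?n. P_eps_R (vmom A \<phi> (Zs ! i)) (length (Zs ! i)) ?\<delta> R)"
  proof (rule sum_mono)
    fix i
    show "(INF p\<in>S. f i p) \<le> P_eps_R (vmom A \<phi> (Zs ! i)) (length (Zs ! i)) ?\<delta> R"
      unfolding P_eps_R_def
    proof (intro INF_greatest)
      fix m :: nat and \<gamma> :: real assume "m \<in> {1..}" "\<gamma> \<in> {0<..}"
      then show "(INF p\<in>S. f i p) \<le> P_eps_R_mg (vmom A \<phi> (Zs ! i)) (length (Zs ! i)) ?\<delta> R m \<gamma>"
        by (intro INF_lower2[of "(m, \<gamma>)"]) (auto simp: S_def f_def)
    qed
  qed
  finally show ?thesis .
qed


lemma P_alpha_R_le: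
  fixes A :: "'a wstar_alg" and Zs :: "'a list list" and r :: "nat \<Rightarrow> real"
  assumes Zs: "Zs \<noteq> []"
  shows "P_alpha_R (vmom A \<phi> (concat Zs)) (length (concat Zs)) (ereal (\<Sum>i<length Zs. r i)) R
    \<le> (\<Sum>i<length Zs. P_alpha_R (vmom A \<phi> (Zs ! i)) (length (Zs ! i)) (ereal (r i)) R)
      + ereal ((\<Sum>i<length Zs. r i) * ln (4 * sqrt (real (length Zs))))"
proof -
  define n where "n = length Zs"
  define c where "c = 4 * sqrt (real n)"
  have c: "c > 0" using Zs by (simp add: c_def n_def)
  define K where "K = ereal ((\<Sum>i<n. r i) * ln c)"
  define P where "P = (\<lambda>\<epsilon>. P_eps_R (vmom A \<phi> (concat Zs)) (length (concat Zs)) \<epsilon> R)"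
  define Pi where "Pi = (\<lambda>i \<epsilon>. P_eps_R (vmom A \<phi> (Zs ! i)) (length (Zs ! i)) \<epsilon> R)"
  define g where "g = (\<lambda>i \<epsilon>. Pi i \<epsilon> + ereal (r i) * ereal (ln (2 * \<epsilon>)))"
  have key: "P \<epsilon> + ereal (\<Sum>i<n. r i) * ereal (ln (2 * \<epsilon>)) \<le> (\<Sum>i<n. g i (\<epsilon> / c)) + K"
    if \<epsilon>: "\<epsilon> > 0" for \<epsilon>
  proof -
    have le: "P \<epsilon> \<le> (\<Sum>i<n. Pi i (\<epsilon> / c))"
      unfolding P_def Pi_def c_def n_def by (rule P_R_le[OF Zs \<epsilon>])
    have lnc: "ln (2 * (\<epsilon> / c)) = ln (2 * \<epsilon>) - ln c" using \<epsilon> c by (simp add: ln_div)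
    have "(\<Sum>i<n. g i (\<epsilon> / c)) + K = (\<Sum>i<n. Pi i (\<epsilon> / c)) + (\<Sum>i<n. ereal (r i * ln (2 * (\<epsilon> / c)))) + K"
      by (simp add: g_def sum.distrib)
    also have "\<dots> = (\<Sum>i<n. Pi i (\<epsilon> / c)) + ereal ((\<Sum>i<n. r i * ln (2 * (\<epsilon> / c))) + (\<Sum>i<n. r i) * ln c)"
      by (simp add: K_def add.assoc)
    also have "(\<Sum>i<n. r i * ln (2 * (\<epsilon> / c))) + (\<Sum>i<n. r i) * ln c = (\<Sum>i<n. r i) * ln (2 * \<epsilon>)"
    proof -
      have "(\<Sum>i<n. r i * ln (2 * (\<epsilon> / c))) = (\<Sum>i<n. r i) * ln (2 * \<epsilon>) - (\<Sum>i<n. r i) * ln c"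
        unfolding lnc by (simp add: right_diff_distrib sum_subtractf sum_distrib_right)
      then show ?thesis by simp
    qed
    finally have eq: "(\<Sum>i<n. g i (\<epsilon> / c)) + K = (\<Sum>i<n. Pi i (\<epsilon> / c)) + ereal ((\<Sum>i<n. r i) * ln (2 * \<epsilon>))" .
    have "P \<epsilon> + ereal (\<Sum>i<n. r i) * ereal (ln (2 * \<epsilon>)) = P \<epsilon> + ereal ((\<Sum>i<n. r i) * ln (2 * \<epsilon>))"
      by simp
    also have "\<dots> \<le> (\<Sum>i<n. Pi i (\<epsilon> / c)) + ereal ((\<Sum>i<n. r i) * ln (2 * \<epsilon>))"
      by (rule add_right_mono[OF le])
    finally show ?thesis using eq by simp
  qed
  have "P_alpha_R (vmom A \<phi> (concat Zs)) (length (concat Zs)) (ereal (\<Sum>i<n. r i)) R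
      = Limsup (at_right 0) (\<lambda>\<epsilon>. P \<epsilon> + ereal (\<Sum>i<n. r i) * ereal (ln (2 * \<epsilon>)))"
    unfolding P_alpha_R_def P_def ..
  also have "\<dots> \<le> Limsup (at_right 0) (\<lambda>\<epsilon>. (\<Sum>i<n. g i (\<epsilon> / c)) + K)"
    by (rule Limsup_mono) (use eventually_at_right_less[of "0::real"] key in \<open>auto elim: eventually_mono\<close>)
  also have "\<dots> \<le> Limsup (at_right 0) (\<lambda>\<epsilon>. \<Sum>i<n. g i (\<epsilon> / c)) + Limsup (at_right (0::real)) (\<lambda>_. K)"
    by (rule Limsup_add_le)
  also have "\<dots> \<le> (\<Sum>i<n. Limsup (at_right 0) (\<lambda>\<epsilon>. g i (\<epsilon> / c))) + K"
    by (intro add_mono Limsup_sum_le Limsup_bounded) auto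
  also have "(\<Sum>i<n. Limsup (at_right 0) (\<lambda>\<epsilon>. g i (\<epsilon> / c))) = (\<Sum>i<n. Limsup (at_right 0) (g i))"
    using c by (simp add: Limsup_scale)
  also have "\<dots> = (\<Sum>i<n. P_alpha_R (vmom A \<phi> (Zs ! i)) (length (Zs ! i)) (ereal (r i)) R)"
    unfolding P_alpha_R_def g_def Pi_def ..
  finally show ?thesis by (simp add: n_def K_def c_def)
qed

lemma P_alpha_minf: "P_alpha \<mu> L (-\<infinity>) = \<infinity>"
proof -
  have "P_alpha_R \<mu> L (-\<infinity>) R = \<infinity>" for R
  proof -
    have ev: "eventually (\<lambda>\<epsilon>. \<infinity> \<le> P_eps_R \<mu> L \<epsilon> R + (-\<infinity>) * ereal (ln (2 * \<epsilon>))) (at_right (0::real))"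
      using eventually_at_right_real[of 0 "1/2::real", OF half_gt_zero[OF zero_less_one]]
    proof (rule eventually_mono)
      fix \<epsilon> :: real assume "\<epsilon> \<in> {0<..<1/2}"
      then have "ln (2 * \<epsilon>) < 0" by (simp add: ln_less_zero_iff) 
      then show "\<infinity> \<le> P_eps_R \<mu> L \<epsilon> R + (-\<infinity>) * ereal (ln (2 * \<epsilon>))" by simp
    qed
    have "\<infinity> \<le> P_alpha_R \<mu> L (-\<infinity>) R"
      unfolding P_alpha_R_def by (rule le_Limsup[OF _ ev]) simp
    then show ?thesis by simp
  qed
  then show ?thesis unfolding P_alpha_def by simp
qed


theorem lemma7p3:
  fixes A :: "'a wstar_alg" and \<phi> :: "'a \<Rightarrow> complex" and Zs :: "'a list list"
  assumes "von_neumann_algebra A"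
    and "normal_tracial_state A \<phi>"
    and "Zs \<noteq> []"
    and "\<forall>Z\<in>set Zs. distinct Z \<and> (\<forall>z\<in>set Z. selfadj A z)"
  shows "packing_entropy A \<phi> (\<Sum>i<length Zs. delta0 A \<phi> (Zs ! i)) (concat Zs)
    \<le> (\<Sum>i<length Zs. packing_entropy A \<phi> (delta0 A \<phi> (Zs ! i)) (Zs ! i))
      + (\<Sum>i<length Zs. delta0 A \<phi> (Zs ! i)) * ereal (ln (4 * sqrt (real (length Zs))))"
proof -
  define n where "n = length Zs"
  define a where "a = (\<lambda>i. delta0 A \<phi> (Zs ! i))"
  have Zs: "Zs \<noteq> []" by (rule assms(3))
  have n: "n \<ge> 1" using Zs by (simp add: n_def Suc_le_eq)
  have lnpos: "ln (4 * sqrt (real n)) > 0"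
  proof -
    have "1 \<le> real n" using n by simp
    then have "1 \<le> sqrt (real n)" by simp
    then have "4 * sqrt (real n) > 1" by linarith
    then show ?thesis by (rule ln_gt_zero)
  qed
  show ?thesis
  proof (cases "\<exists>i<n. a i = -\<infinity>")
    case True
    then obtain i where i: "i < n" "a i = -\<infinity>" by blast
    have "(\<Sum>j<n. packing_entropy A \<phi> (a j) (Zs ! j)) = \<infinity>"
      by (rule sum_ereal_PInf[OF i(1)]) (simp add: i(2) packing_entropy_def P_alpha_minf)
    then show ?thesis by (simp add: a_def n_def)
  next
    case False
    note nominf = False
    show ?thesis
    proof (cases "\<exists>i<n. a i = \<infinity>")
      case True
      then obtain i where i: "i < n" "a i = \<infinity>" by blast
      have "(\<Sum>j<n. a j) = \<infinity>" by (rule sum_ereal_PInf[of i n a, OF i])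
      then have "(\<Sum>j<n. a j) * ereal (ln (4 * sqrt (real n))) = \<infinity>" using lnpos by simp
      then have eqinf: "(\<Sum>i<length Zs. delta0 A \<phi> (Zs ! i)) * ereal (ln (4 * sqrt (real (length Zs)))) = \<infinity>"
        by (simp add: a_def n_def)
      show ?thesis unfolding eqinf by simp
    next
      case False
      define r where "r = (\<lambda>i. real_of_ereal (a i))"
      have ar: "a i = ereal (r i)" if "i < n" for i
        using False nominf that unfolding r_def by (cases "a i") auto
      have suma: "(\<Sum>i<n. a i) = ereal (\<Sum>i<n. r i)"
        using ar by (simp add: sum_ereal[symmetric] del: sum_ereal)
      define K where "K = ereal ((\<Sum>i<n. r i) * ln (4 * sqrt (real n)))"
      have "P_alpha (vmom A \<phi> (concat Zs)) (length (concat Zs)) (ereal (\<Sum>i<n. r i))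
          \<le> (\<Sum>i<n. P_alpha (vmom A \<phi> (Zs ! i)) (length (Zs ! i)) (ereal (r i))) + K"
        unfolding P_alpha_def[of "vmom A \<phi> (concat Zs)"]
      proof (rule SUP_least)
        fix R :: real assume R: "R \<in> {0<..}"
        have "P_alpha_R (vmom A \<phi> (concat Zs)) (length (concat Zs)) (ereal (\<Sum>i<n. r i)) R
          \<le> (\<Sum>i<n. P_alpha_R (vmom A \<phi> (Zs ! i)) (length (Zs ! i)) (ereal (r i)) R) + K"
          using P_alpha_R_le[OF Zs, of A \<phi> r R] by (simp add: n_def K_def)
        also have "\<dots> \<le> (\<Sum>i<n. P_alpha (vmom A \<phi> (Zs ! i)) (length (Zs ! i)) (ereal (r i))) + K"
          unfolding P_alpha_def using R by (intro add_right_mono sum_mono SUP_upper) auto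
        finally show "P_alpha_R (vmom A \<phi> (concat Zs)) (length (concat Zs)) (ereal (\<Sum>i<n. r i)) R
          \<le> (\<Sum>i<n. P_alpha (vmom A \<phi> (Zs ! i)) (length (Zs ! i)) (ereal (r i))) + K" .
      qed
      moreover have "(\<Sum>i<n. packing_entropy A \<phi> (a i) (Zs ! i)) = (\<Sum>i<n. P_alpha (vmom A \<phi> (Zs ! i)) (length (Zs ! i)) (ereal (r i)))"
        by (rule sum.cong) (simp_all add: packing_entropy_def ar)
      moreover have "(\<Sum>i<n. a i) * ereal (ln (4 * sqrt (real n))) = K"
        by (simp add: suma K_def)
      ultimately show ?thesis
        by (simp add: packing_entropy_def suma[unfolded a_def n_def] a_def n_def)
    qed
  qed
qed

end
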